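(* Let $G=(V,E)$ be a graph, $k\ge1$ an integer, and let $G_k$ be obtained from $G$ by performing a $k$-comb operation at every vertex of $G$. Let $p(k,u,x)=(1+x)^k(xu^2+1)-xu^2$. Then $$P(G_k;u,x)=p(k,u,x)^{|V|}\,P\big(G;u,\,x/p(k,u,x)\big)$$ (as an identity of rational functions; the right-hand side is a polynomial).
   Context: Graphs are finite, undirected, without multiple edges, self loops allowed; $G[A]$ is the induced subgraph on $A$, and $rk(G)$ is the $\mathbb{F}_2$-rank of the adjacency matrix ($m_{ij}=1$ iff $\{i,j\}\in E$, diagonal entry $1$ iff self loop; empty graph rank $0$). $P(G;u,x)=\sum_{A\subseteq V}x^{|A|}u^{rk(G[A])}$, with $0^0=1$. The $k$-comb of $G$ at a vertex $a$ is the graph $(V\cup\{a_1,\dots,a_k\},\,E\cup\{\{a,a_1\},\dots,\{a,a_k\}\})$ with $a_1,\dots,a_k$ new vertices (no self loops). $G_k$ is obtained by adding such a $k$-comb (with fresh new vertices) at each original vertex $a\in V$. *)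

theory Defs
  imports Complex_Main
begin

text \<open>A graph is a pair (V, E): V a finite vertex set, E a set of edges, each edge
 a set of one (self loop) or two vertices of V.\<close>

definition is_graph :: "'a set \<Rightarrow> 'a set set \<Rightarrow> bool" where
  "is_graph V E \<longleftrightarrow> finite V \<and> (\<forall>e\<in>E. e \<subseteq> V \<and> (card e = 1 \<or> card e = 2))"

text \<open>Rows of the adjacency matrix of G[A] over F_2 indexed by a set S \<subseteq> A are linearly
 independent iff no nonempty subset T of S has rows summing to zero mod 2.\<close>

definition rows_indep :: "'a set set \<Rightarrow> 'a set \<Rightarrow> 'a set \<Rightarrow> bool" where
  "rows_indep E A S \<longleftrightarrow>
     (\<forall>T. T \<subseteq> S \<and> T \<noteq> {} \<longrightarrow> (\<exists>j\<in>A. odd (card {i\<in>T. {i, j} \<in> E})))"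

text \<open>F_2-rank of the adjacency matrix of the induced subgraph G[A]
 (maximal number of linearly independent rows); rank of the empty graph is 0.\<close>

definition rk_induced :: "'a set set \<Rightarrow> 'a set \<Rightarrow> nat" where
  "rk_induced E A = Max {card S | S. S \<subseteq> A \<and> rows_indep E A S}"

definition interlace_poly :: "'a set \<Rightarrow> 'a set set \<Rightarrow> real \<Rightarrow> real \<Rightarrow> real" where
  "interlace_poly V E u x = (\<Sum>A\<in>Pow V. x ^ card A * u ^ rk_induced E A)"

text \<open>G_k: a k-comb at every vertex a, with fresh vertices Inr (a,1), ..., Inr (a,k).\<close>

definition comb_all_V :: "'a set \<Rightarrow> nat \<Rightarrow> ('a + 'a \<times> nat) set" where
  "comb_all_V V k = Inl ` V \<union> {Inr (a, i) | a i. a \<in> V \<and> 1 \<le> i \<and> i \<le> k}"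

definition comb_all_E :: "'a set \<Rightarrow> 'a set set \<Rightarrow> nat \<Rightarrow> ('a + 'a \<times> nat) set set" where
  "comb_all_E V E k = (image Inl) ` E \<union> {{Inl a, Inr (a, i)} | a i. a \<in> V \<and> 1 \<le> i \<and> i \<le> k}"

definition comb_p :: "nat \<Rightarrow> real \<Rightarrow> real \<Rightarrow> real" where
  "comb_p k u x = (1 + x) ^ k * (x * u\<^sup>2 + 1) - x * u\<^sup>2"

end

theory Submission
  imports Defs
begin


lemma ri_mono: "rows_indep E A S \<Longrightarrow> S' \<subseteq> S \<Longrightarrow> rows_indep E A S'"
  unfolding rows_indep_def by blast

lemma ri_empty: "rows_indep E A {}"
  unfolding rows_indep_def by blast

lemma rk_fin: "finite A \<Longrightarrow> finite {card S | S. S \<subseteq> A \<and> rows_indep E A S}"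
proof -
  assume "finite A"
  have "{card S | S. S \<subseteq> A \<and> rows_indep E A S} \<subseteq> card ` Pow A" by auto
  then show ?thesis using \<open>finite A\<close> finite_subset by blast
qed

lemma rk_ge: assumes "finite A" "S \<subseteq> A" "rows_indep E A S" shows "card S \<le> rk_induced E A"
  unfolding rk_induced_def using assms rk_fin[OF assms(1)] by (intro Max_ge) auto

lemma rk_le: assumes "finite A" "\<And>S. S \<subseteq> A \<Longrightarrow> rows_indep E A S \<Longrightarrow> card S \<le> n"
  shows "rk_induced E A \<le> n"
  unfolding rk_induced_def using assms rk_fin[OF assms(1)] ri_empty
  by (intro Max.boundedI) auto

lemma rk_wit: assumes "finite A" shows "\<exists>S. S \<subseteq> A \<and> rows_indep E A S \<and> card S = rk_induced E A"
proof -
  have "rk_induced E A \<in> {card S | S. S \<subseteq> A \<and> rows_indep E A S}"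
    unfolding rk_induced_def using rk_fin[OF assms] ri_empty by (intro Max_in) auto
  then show ?thesis by auto
qed

lemma symdiff_parity: assumes "finite A" "finite B"
  shows "odd (card ((A - B) \<union> (B - A))) \<longleftrightarrow> (odd (card A) \<noteq> odd (card B))"
proof -
  have e1: "(A-B) \<union> (A\<inter>B) = A" "(B-A) \<union> (A\<inter>B) = B" by blast+
  have "card ((A-B) \<union> (A\<inter>B)) = card (A-B) + card (A\<inter>B)" using assms by (intro card_Un_disjoint) auto
  then have 1: "card A = card (A - B) + card (A \<inter> B)" using e1 by simp
  have "card ((B-A) \<union> (A\<inter>B)) = card (B-A) + card (A\<inter>B)" using assms by (intro card_Un_disjoint) auto
  then have 2: "card B = card (B - A) + card (A \<inter> B)" using e1 by simp
  have 3: "card ((A - B) \<union> (B - A)) = card (A - B) + card (B - A)"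
    using assms by (intro card_Un_disjoint) auto
  show ?thesis using 1 2 3 by presburger
qed

lemma del_col: assumes "finite S" "rows_indep E (insert j A) S"
  shows "\<exists>S'\<subseteq>S. card S \<le> Suc (card S') \<and> rows_indep E A S'"
proof (cases "rows_indep E A S")
  case True then show ?thesis by auto
next
  case False
  then obtain T0 where T0: "T0 \<subseteq> S" "T0 \<noteq> {}" "\<forall>c\<in>A. even (card {i\<in>T0. {i,c} \<in> E})"
    unfolding rows_indep_def by blast
  with assms(2) have oddj: "odd (card {i\<in>T0. {i,j} \<in> E})"
    unfolding rows_indep_def by blast
  obtain t where t: "t \<in> T0" using T0 by blast
  have "rows_indep E A (S - {t})"
    unfolding rows_indep_def
  proof (intro allI impI)
    fix T assume T: "T \<subseteq> S - {t} \<and> T \<noteq> {}"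
    show "\<exists>c\<in>A. odd (card {i\<in>T. {i,c} \<in> E})"
    proof (rule ccontr)
      assume ev: "\<not> (\<exists>c\<in>A. odd (card {i\<in>T. {i,c} \<in> E}))"
      with assms(2) T have oT: "odd (card {i\<in>T. {i,j} \<in> E})"
        unfolding rows_indep_def by blast
      define U where "U = (T - T0) \<union> (T0 - T)"
      have U: "U \<subseteq> S" "U \<noteq> {}" using T T0 t unfolding U_def by auto
      have finT: "finite T" "finite T0" using T T0(1) assms(1) by (auto intro: rev_finite_subset)
      have par: "odd (card {i\<in>U. {i,c} \<in> E}) \<longleftrightarrow> (odd (card {i\<in>T. {i,c} \<in> E}) \<noteq> odd (card {i\<in>T0. {i,c} \<in> E}))" for c
      proof -
        have "{i\<in>U. {i,c} \<in> E} = ({i\<in>T. {i,c} \<in> E} - {i\<in>T0. {i,c} \<in> E}) \<union> ({i\<in>T0. {i,c} \<in> E} - {i\<in>T. {i,c} \<in> E})"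
          unfolding U_def by auto
        then show ?thesis using symdiff_parity[of "{i\<in>T. {i,c} \<in> E}" "{i\<in>T0. {i,c} \<in> E}"] finT by simp
      qed
      from assms(2) U obtain c where c: "c \<in> insert j A" "odd (card {i\<in>U. {i,c} \<in> E})"
        unfolding rows_indep_def by blast
      show False using c par ev oT oddj T0(3) by auto
    qed
  qed
  moreover have "card S \<le> Suc (card (S - {t}))"
  proof -
    have tS: "t \<in> S" using t T0(1) by blast
    then have "card S > 0" using assms(1) card_gt_0_iff by blast
    then show ?thesis using tS assms(1) by (simp add: card_Diff_singleton)
  qed
  ultimately show ?thesis by blast
qed



lemma rk_isolated:
  assumes "finite Y" "finite M" "\<forall>m\<in>M. \<forall>y\<in>Y\<union>M. {m,y} \<notin> E"
  shows "rk_induced E (Y \<union> M) = rk_induced E Y"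
proof -
  have a: "S \<inter> M = {}" if "S \<subseteq> Y \<union> M" "rows_indep E (Y \<union> M) S" for S
  proof (rule ccontr)
    assume "S \<inter> M \<noteq> {}"
    then obtain m where m: "m \<in> S" "m \<in> M" by blast
    with that(2) obtain j where j: "j \<in> Y \<union> M" "odd (card {i\<in>{m}. {i,j} \<in> E})"
      unfolding rows_indep_def by (metis empty_iff insert_subset subsetI singletonD)
    have "{m,j} \<notin> E" using assms(3) m j(1) by blast
    then have "{i\<in>{m}. {i,j} \<in> E} = {}" by auto
    with j(2) show False by (metis card.empty even_zero)
  qed
  have b: "rows_indep E (Y \<union> M) S \<longleftrightarrow> rows_indep E Y S" if "S \<subseteq> Y" for S
  proof -
    have z: "{i\<in>T. {i,j} \<in> E} = {}" if "T \<subseteq> Y" "j \<in> M" for T j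
    proof -
      { fix i assume "i \<in> T"
        then have "i \<in> Y" using that by blast
        then have "{j,i} \<notin> E" using assms(3) that(2) by blast
        moreover have "{i,j} = {j,i}" by blast
        ultimately have "{i,j} \<notin> E" by simp }
      then show ?thesis by blast
    qed
    show ?thesis unfolding rows_indep_def
    proof (intro iffI allI impI)
      fix T assume h: "\<forall>T. T \<subseteq> S \<and> T \<noteq> {} \<longrightarrow> (\<exists>j\<in>Y \<union> M. odd (card {i \<in> T. {i, j} \<in> E}))"
        and T: "T \<subseteq> S \<and> T \<noteq> {}"
      then obtain j where "j \<in> Y \<union> M" "odd (card {i \<in> T. {i, j} \<in> E})" by blast
      moreover have "T \<subseteq> Y" using T that by blast
      ultimately show "\<exists>j\<in>Y. odd (card {i \<in> T. {i, j} \<in> E})" using z by fastforce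
    next
      fix T assume h: "\<forall>T. T \<subseteq> S \<and> T \<noteq> {} \<longrightarrow> (\<exists>j\<in>Y. odd (card {i \<in> T. {i, j} \<in> E}))"
        and T: "T \<subseteq> S \<and> T \<noteq> {}"
      then show "\<exists>j\<in>Y \<union> M. odd (card {i \<in> T. {i, j} \<in> E})" by blast
    qed
  qed
  have "{card S | S. S \<subseteq> Y \<union> M \<and> rows_indep E (Y \<union> M) S} = {card S | S. S \<subseteq> Y \<and> rows_indep E Y S}"
  proof (intro equalityI subsetI)
    fix n assume "n \<in> {card S | S. S \<subseteq> Y \<union> M \<and> rows_indep E (Y \<union> M) S}"
    then obtain S where S: "n = card S" "S \<subseteq> Y \<union> M" "rows_indep E (Y \<union> M) S" by blast
    then have "S \<subseteq> Y" using a by blast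
    then show "n \<in> {card S | S. S \<subseteq> Y \<and> rows_indep E Y S}" using S b by blast
  next
    fix n assume "n \<in> {card S | S. S \<subseteq> Y \<and> rows_indep E Y S}"
    then obtain S where S: "n = card S" "S \<subseteq> Y" "rows_indep E Y S" by blast
    then show "n \<in> {card S | S. S \<subseteq> Y \<union> M \<and> rows_indep E (Y \<union> M) S}" using b by blast
  qed
  then show ?thesis unfolding rk_induced_def by simp
qed



lemma rk_pendant:
  assumes "finite Y" "finite M" "M \<noteq> {}" "w0 \<in> Y" "M \<inter> Y = {}"
    and adj: "\<And>m y. m \<in> M \<Longrightarrow> ({m,y} \<in> E) = (y = w0)"
  shows "rk_induced E (Y \<union> M) = Suc (Suc (rk_induced E (Y - {w0})))"
proof -
  have adj': "({i,m} \<in> E) = (i = w0)" if "m \<in> M" for i m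
  proof -
    have "{i,m} = {m,i}" by blast
    then show ?thesis using adj[OF that, of i] by simp
  qed
  have w0M: "w0 \<notin> M" using assms(4,5) by blast
  have finYM: "finite (Y \<union> M)" using assms(1,2) by simp
  have fin0: "finite (Y - {w0})" using assms(1) by simp
  obtain S0 where S0: "S0 \<subseteq> Y - {w0}" "rows_indep E (Y - {w0}) S0"
    "card S0 = rk_induced E (Y - {w0})" using rk_wit[OF fin0] by blast
  obtain m where m: "m \<in> M" using assms(3) by blast
  define S where "S = insert w0 (insert m S0)"
  have mS0: "m \<notin> S0" using S0(1) m assms(5) by blast
  have w0S0: "w0 \<notin> S0" using S0(1) by blast
  have mw0: "m \<noteq> w0" using m w0M by blast
  have finS0: "finite S0" using S0(1) fin0 finite_subset by blast
  have cardS: "card S = Suc (Suc (card S0))"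
    unfolding S_def using mS0 w0S0 mw0 finS0 by simp
  have SYM: "S \<subseteq> Y \<union> M" unfolding S_def using S0(1) m assms(4) by blast
  have indS: "rows_indep E (Y \<union> M) S"
    unfolding rows_indep_def
  proof (intro allI impI)
    fix T assume T: "T \<subseteq> S \<and> T \<noteq> {}"
    show "\<exists>j\<in>Y \<union> M. odd (card {i \<in> T. {i, j} \<in> E})"
    proof (cases "w0 \<in> T")
      case True
      have "{i \<in> T. {i, m} \<in> E} = {w0}" using True adj'[OF m] by auto
      then show ?thesis using m by (intro bexI[of _ m]) auto
    next
      case False
      show ?thesis
      proof (cases "T \<inter> S0 = {}")
        case True
        then have "T = {m}" using T False unfolding S_def by blast
        moreover have "{m, w0} \<in> E" using adj[OF m] by simp
        ultimately have "{i \<in> T. {i, w0} \<in> E} = {m}" by auto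
        then show ?thesis using assms(4) by (intro bexI[of _ w0]) auto
      next
        case False2: False
        obtain j where j: "j \<in> Y - {w0}" "odd (card {i \<in> T \<inter> S0. {i, j} \<in> E})"
        proof -
          have "T \<inter> S0 \<subseteq> S0 \<and> T \<inter> S0 \<noteq> {}" using False2 by blast
          then show ?thesis using S0(2) that unfolding rows_indep_def by blast
        qed
        have "{i \<in> T. {i, j} \<in> E} = {i \<in> T \<inter> S0. {i, j} \<in> E}"
          using T False adj[OF m, of j] j(1) unfolding S_def by auto
        then show ?thesis using j by (intro bexI[of _ j]) auto
      qed
    qed
  qed
  have ge: "Suc (Suc (rk_induced E (Y - {w0}))) \<le> rk_induced E (Y \<union> M)"
    using rk_ge[OF finYM SYM indS] cardS S0(3) by simp
  have le: "rk_induced E (Y \<union> M) \<le> Suc (Suc (rk_induced E (Y - {w0})))"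
  proof (rule rk_le[OF finYM])
    fix S assume SS: "S \<subseteq> Y \<union> M" and iS: "rows_indep E (Y \<union> M) S"
    have finS: "finite S" using SS finYM finite_subset by blast
    have zeroM: "{i \<in> T. {i, j} \<in> E} = {}" if "T \<subseteq> Y - {w0}" "j \<in> M" for T j
      using that adj'[OF that(2)] by auto
    show "card S \<le> Suc (Suc (rk_induced E (Y - {w0})))"
    proof (cases "S \<inter> M = {}")
      case False
      then obtain m where m: "m \<in> S" "m \<in> M" by blast
      have one: "card (S \<inter> M) \<le> 1"
      proof -
        have "m1 = m2" if h12: "m1 \<in> S \<inter> M" "m2 \<in> S \<inter> M" for m1 m2
        proof (rule ccontr)
          assume ne: "m1 \<noteq> m2"
          obtain j where j: "j \<in> Y \<union> M" "odd (card {i \<in> {m1,m2}. {i, j} \<in> E})"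
          proof -
            have "{m1,m2} \<subseteq> S \<and> {m1,m2} \<noteq> {}" using h12 by blast
            then show ?thesis using iS that unfolding rows_indep_def by blast
          qed
          have "{i \<in> {m1,m2}. {i, j} \<in> E} = (if j = w0 then {m1,m2} else {})"
            using h12 adj[of m1] adj[of m2] by auto
          then show False using j ne by (auto split: if_splits)
        qed
        then show ?thesis using finS by (simp add: card_le_Suc0_iff_eq)
      qed
      define S1 where "S1 = S - M - {w0}"
      have S1sub: "S1 \<subseteq> Y - {w0}" using SS unfolding S1_def by blast
      have "S \<subseteq> S1 \<union> (S \<inter> M) \<union> {w0}" unfolding S1_def by blast
      then have "card S \<le> card (S1 \<union> (S \<inter> M) \<union> {w0})" using finS unfolding S1_def by (intro card_mono) auto
      also have "\<dots> \<le> card S1 + card (S \<inter> M) + 1"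
        using card_Un_le[of "S1 \<union> (S \<inter> M)" "{w0}"] card_Un_le[of S1 "S \<inter> M"] by simp
      finally have cS: "card S \<le> Suc (Suc (card S1))" using one by simp
      have iS1: "rows_indep E (Y - {w0}) S1"
        unfolding rows_indep_def
      proof (intro allI impI)
        fix T assume T: "T \<subseteq> S1 \<and> T \<noteq> {}"
        show "\<exists>j\<in>Y - {w0}. odd (card {i \<in> T. {i, j} \<in> E})"
        proof (rule ccontr)
          assume ev: "\<not> (\<exists>j\<in>Y - {w0}. odd (card {i \<in> T. {i, j} \<in> E}))"
          have TY: "T \<subseteq> Y - {w0}" using T S1sub by blast
          have TS: "T \<subseteq> S" using T unfolding S1_def by blast
          obtain j where j: "j \<in> Y \<union> M" "odd (card {i \<in> T. {i, j} \<in> E})"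
            using iS TS T unfolding rows_indep_def by blast
          have jw: "j = w0" using j ev zeroM[OF TY] by fastforce
          have finT: "finite T" using TS finS finite_subset by blast
          have mT: "m \<notin> T" using TY m(2) assms(5) by blast
          obtain j' where j': "j' \<in> Y \<union> M" "odd (card {i \<in> insert m T. {i, j'} \<in> E})"
          proof -
            have "insert m T \<subseteq> S \<and> insert m T \<noteq> {}" using TS m(1) by blast
            then show ?thesis using iS that unfolding rows_indep_def by blast
          qed
          show False
          proof (cases "j' \<in> M")
            case True
            have "{i \<in> insert m T. {i, j'} \<in> E} = {}"
              using zeroM[OF TY True] adj[OF m(2), of j'] True w0M by auto
            then show False using j' by (metis card.empty even_zero)
          next
            case jM: False
            show False
            proof (cases "j' = w0")
              case True
              have "{i \<in> insert m T. {i, j'} \<in> E} = insert m {i \<in> T. {i, j'} \<in> E}"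
                using True adj[OF m(2)] by auto
              then have "card {i \<in> insert m T. {i, j'} \<in> E} = Suc (card {i \<in> T. {i, j'} \<in> E})"
                using mT finT by simp
              then show False using j' j jw True by simp
            next
              case False
              have "{i \<in> insert m T. {i, j'} \<in> E} = {i \<in> T. {i, j'} \<in> E}"
                using False adj[OF m(2)] by auto
              then show False using j' ev jM False by auto
            qed
          qed
        qed
      qed
      show ?thesis using rk_ge[OF fin0 S1sub iS1] cS by simp
    next
      case True
      define S1 where "S1 = S - {w0}"
      have S1sub: "S1 \<subseteq> Y - {w0}" using SS True unfolding S1_def by blast
      have cS: "card S \<le> Suc (card S1)"
      proof (cases "w0 \<in> S")
        case True
        then have "card S > 0" using finS card_gt_0_iff by blast
        then show ?thesis using True finS by (simp add: card_Diff_singleton S1_def)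
      next
        case False then show ?thesis by (simp add: S1_def)
      qed
      have finS1: "finite S1" using finS unfolding S1_def by simp
      have iS1: "rows_indep E (insert w0 (Y - {w0})) S1"
        unfolding rows_indep_def
      proof (intro allI impI)
        fix T assume T: "T \<subseteq> S1 \<and> T \<noteq> {}"
        have TY: "T \<subseteq> Y - {w0}" using T S1sub by blast
        obtain j where j: "j \<in> Y \<union> M" "odd (card {i \<in> T. {i, j} \<in> E})"
          using iS T unfolding rows_indep_def S1_def by blast
        have "j \<notin> M" using j zeroM[OF TY] by fastforce
        then show "\<exists>j\<in>insert w0 (Y - {w0}). odd (card {i \<in> T. {i, j} \<in> E})" using j by blast
      qed
      obtain S' where S': "S' \<subseteq> S1" "card S1 \<le> Suc (card S')" "rows_indep E (Y - {w0}) S'"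
        using del_col[OF finS1 iS1] by blast
      have "card S' \<le> rk_induced E (Y - {w0})" using rk_ge[OF fin0 _ S'(3)] S'(1) S1sub by blast
      then show ?thesis using cS S'(2) by simp
    qed
  qed
  show ?thesis using ge le by simp
qed



definition leaves :: "'a set \<Rightarrow> nat \<Rightarrow> ('a + 'a \<times> nat) set" where
  "leaves W k = Inr ` (W \<times> {1..k})"

lemma comb_V_eq: "comb_all_V V k = Inl ` V \<union> leaves V k"
  unfolding comb_all_V_def leaves_def by auto

lemma leaf_adj:
  assumes "w \<in> V" "m \<in> leaves {w} k"
  shows "({m,y} \<in> comb_all_E V E k) = (y = Inl w)"
proof -
  obtain i where i: "m = Inr (w,i)" "1 \<le> i" "i \<le> k" using assms(2) unfolding leaves_def by auto
  have n1: "{m,y} \<notin> (image Inl) ` E" using i by auto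
  have "({m,y} \<in> {{Inl a, Inr (a, i)} | a i. a \<in> V \<and> 1 \<le> i \<and> i \<le> k}) = (y = Inl w)"
  proof
    assume "{m,y} \<in> {{Inl a, Inr (a, i)} | a i. a \<in> V \<and> 1 \<le> i \<and> i \<le> k}"
    then obtain a j where "{m,y} = {Inl a, Inr (a, j)}" by blast
    then show "y = Inl w" using i(1) by (auto simp: doubleton_eq_iff)
  next
    assume "y = Inl w"
    then have "{m,y} = {Inl w, Inr (w, i)}" using i by auto
    then show "{m,y} \<in> {{Inl a, Inr (a, i)} | a i. a \<in> V \<and> 1 \<le> i \<and> i \<le> k}" using i assms(1) by blast
  qed
  then show ?thesis using n1 unfolding comb_all_E_def by blast
qed

lemma inl_adj: "({Inl i, Inl j} \<in> comb_all_E V E k) = ({i,j} \<in> E)"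
proof
  assume H: "{Inl i, Inl j} \<in> comb_all_E V E k"
  have n: "{Inl i, Inl j} \<noteq> {Inl a, Inr (a, i')}" for a i'
  proof
    assume "{Inl i, Inl j} = {Inl a, Inr (a, i')}"
    then have "Inr (a, i') \<in> {Inl i, Inl j}" by simp
    then show False by simp
  qed
  have notin: "{Inl i, Inl j} \<notin> {{Inl a, Inr (a, i)} | a i. a \<in> V \<and> 1 \<le> i \<and> i \<le> k}"
  proof
    assume "{Inl i, Inl j} \<in> {{Inl a, Inr (a, i)} | a i. a \<in> V \<and> 1 \<le> i \<and> i \<le> k}"
    then obtain a i' where "{Inl i, Inl j} = {Inl a, Inr (a,i')}" by blast
    then show False using n by metis
  qed
  have H': "{Inl i, Inl j} \<in> ((image Inl) ` E :: ('a + 'a \<times> nat) set set) \<union> {{Inl a, Inr (a, i)} | a i. a \<in> V \<and> 1 \<le> i \<and> i \<le> k}"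
    using H unfolding comb_all_E_def .
  have "{Inl i, Inl j} \<in> ((image Inl) ` E :: ('a + 'a \<times> nat) set set)"
    using H'
  proof (rule UnE)
    assume "{Inl i, Inl j} \<in> {{Inl a, Inr (a, i)} | a i. a \<in> V \<and> 1 \<le> i \<and> i \<le> k}"
    with notin show ?thesis by (rule notE)
  qed
  then obtain e where e: "e \<in> E" "{Inl i, Inl j} = (Inl ` e :: ('a + 'a \<times> nat) set)" by blast
  have "(Inl ` {i,j} :: ('a + 'a \<times> nat) set) = Inl ` e" using e(2) by simp
  then have "{i,j} = e" using inj_image_eq_iff[OF inj_Inl] by blast
  then show "{i,j} \<in> E" using e by simp
next
  assume "{i,j} \<in> E"
  then have "Inl ` {i,j} \<in> ((image Inl) ` E :: ('a + 'a \<times> nat) set set)" by blast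
  then show "{Inl i, Inl j} \<in> comb_all_E V E k" unfolding comb_all_E_def by simp
qed

lemma ri_inl: "rows_indep (comb_all_E V E k) (Inl ` B) (Inl ` S) = rows_indep E B S"
proof -
  have c: "card {i \<in> Inl ` T. {i, Inl j} \<in> comb_all_E V E k} = card {i\<in>T. {i,j} \<in> E}" for T j
  proof -
    have "{i \<in> Inl ` T. {i, Inl j} \<in> comb_all_E V E k} = Inl ` {i\<in>T. {i,j} \<in> E}"
      by (auto simp: inl_adj)
    then show ?thesis by (simp add: card_image)
  qed
  show ?thesis unfolding rows_indep_def
  proof (intro iffI allI impI)
    fix T assume h: "\<forall>T. T \<subseteq> Inl ` S \<and> T \<noteq> {} \<longrightarrow> (\<exists>j\<in>Inl ` B. odd (card {i \<in> T. {i, j} \<in> comb_all_E V E k}))"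
      and T: "T \<subseteq> S \<and> T \<noteq> {}"
    have "Inl ` T \<subseteq> Inl ` S \<and> Inl ` T \<noteq> {}" using T by blast
    then obtain j where j: "j \<in> Inl ` B" "odd (card {i \<in> Inl ` T. {i, j} \<in> comb_all_E V E k})"
      using h by blast
    then obtain b where b: "b \<in> B" "j = Inl b" by blast
    have "odd (card {i \<in> T. {i, b} \<in> E})" using j(2) c[of T b] b(2) by simp
    then show "\<exists>j\<in>B. odd (card {i \<in> T. {i, j} \<in> E})" using b(1) by blast
  next
    fix T :: "('a + 'a \<times> nat) set" assume h: "\<forall>T. T \<subseteq> S \<and> T \<noteq> {} \<longrightarrow> (\<exists>j\<in>B. odd (card {i \<in> T. {i, j} \<in> E}))"
      and T: "T \<subseteq> Inl ` S \<and> T \<noteq> {}"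
    then obtain T0 where T0: "T0 \<subseteq> S" "T = Inl ` T0" by (meson subset_image_iff)
    then have "T0 \<noteq> {}" using T by blast
    then obtain j where j: "j \<in> B" "odd (card {i \<in> T0. {i, j} \<in> E})" using h T0 by blast
    have "odd (card {i \<in> T. {i, Inl j} \<in> comb_all_E V E k})" using j(2) c[of T0 j] T0(2) by simp
    then show "\<exists>j\<in>Inl ` B. odd (card {i \<in> T. {i, j} \<in> comb_all_E V E k})"
      using j(1) by blast
  qed
qed

lemma rk_inl: "rk_induced (comb_all_E V E k) (Inl ` B) = rk_induced E B"
proof -
  have "{card S' | S'. S' \<subseteq> Inl ` B \<and> rows_indep (comb_all_E V E k) (Inl ` B) S'} =
        {card S | S. S \<subseteq> B \<and> rows_indep E B S}"
  proof (intro equalityI subsetI)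
    fix n assume "n \<in> {card S' | S'. S' \<subseteq> Inl ` B \<and> rows_indep (comb_all_E V E k) (Inl ` B) S'}"
    then obtain S' where S': "n = card S'" "S' \<subseteq> Inl ` B" "rows_indep (comb_all_E V E k) (Inl ` B) S'" by blast
    then obtain S where S: "S \<subseteq> B" "S' = Inl ` S" by (meson subset_image_iff)
    then show "n \<in> {card S | S. S \<subseteq> B \<and> rows_indep E B S}"
      using S' ri_inl[of V E k B S] by (auto simp: card_image)
  next
    fix n assume "n \<in> {card S | S. S \<subseteq> B \<and> rows_indep E B S}"
    then obtain S where S: "n = card S" "S \<subseteq> B" "rows_indep E B S" by blast
    then have "n = card (Inl ` S) \<and> Inl ` S \<subseteq> Inl ` B \<and> rows_indep (comb_all_E V E k) (Inl ` B) (Inl ` S)"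
      using ri_inl[of V E k B S] by (auto simp: card_image)
    then show "n \<in> {card S' | S'. S' \<subseteq> Inl ` B \<and> rows_indep (comb_all_E V E k) (Inl ` B) S'}" by blast
  qed
  then show ?thesis unfolding rk_induced_def by simp
qed

lemma pow_insert_sum:
  assumes "a \<notin> F" "finite F"
  shows "sum g (Pow (insert a F)) = sum g (Pow F) + sum (\<lambda>A. g (insert a A)) (Pow F)"
proof -
  have inj: "inj_on (insert a) (Pow F)"
    using assms(1) by (intro inj_onI) (metis Diff_insert_absorb PowD subsetD)
  have "sum g (Pow (insert a F)) = sum g (Pow F) + sum g (insert a ` Pow F)"
    unfolding Pow_insert using assms by (intro sum.union_disjoint) auto
  also have "sum g (insert a ` Pow F) = sum (\<lambda>A. g (insert a A)) (Pow F)"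
    using sum.reindex[OF inj] by simp
  finally show ?thesis .
qed

lemma pow_binom: "finite L \<Longrightarrow> (\<Sum>M\<in>Pow L. (x::real) ^ card M) = (1 + x) ^ card L"
proof (induction L rule: finite_induct)
  case empty then show ?case by simp
next
  case (insert a F)
  have "(\<Sum>M\<in>Pow (insert a F). x ^ card M) = (\<Sum>M\<in>Pow F. x ^ card M) + (\<Sum>M\<in>Pow F. x ^ card (insert a M))"
    using pow_insert_sum[OF insert(2,1)] by simp
  also have "(\<Sum>M\<in>Pow F. x ^ card (insert a M)) = (\<Sum>M\<in>Pow F. x * x ^ card M)"
  proof (rule sum.cong)
    fix M assume "M \<in> Pow F"
    then have "finite M" "a \<notin> M" using insert(1,2) finite_subset by auto
    then show "x ^ card (insert a M) = x * x ^ card M" by simp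
  qed simp
  finally show ?case using insert(1,2,3) by (simp add: sum_distrib_left[symmetric] algebra_simps)
qed


lemma pow_un_sum:
  assumes "finite X" "finite L" "X \<inter> L = {}"
  shows "sum f (Pow (X \<union> L)) = (\<Sum>A\<in>Pow X. \<Sum>M\<in>Pow L. f (A \<union> M))"
proof -
  have img: "Pow (X \<union> L) = (\<lambda>(A,M). A \<union> M) ` (Pow X \<times> Pow L)"
  proof (intro equalityI subsetI)
    fix Y assume "Y \<in> Pow (X \<union> L)"
    then have "Y = (\<lambda>(A,M). A \<union> M) (Y \<inter> X, Y \<inter> L)" "(Y \<inter> X, Y \<inter> L) \<in> Pow X \<times> Pow L" by auto
    then show "Y \<in> (\<lambda>(A,M). A \<union> M) ` (Pow X \<times> Pow L)" by blast
  qed auto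
  have inj: "inj_on (\<lambda>(A,M). A \<union> M) (Pow X \<times> Pow L)"
  proof (rule inj_onI, clarify)
    fix A M A' M' assume h: "A \<subseteq> X" "M \<subseteq> L" "A' \<subseteq> X" "M' \<subseteq> L" "A \<union> M = A' \<union> M'"
    have "A = (A \<union> M) \<inter> X" "A' = (A' \<union> M') \<inter> X" "M = (A \<union> M) \<inter> L" "M' = (A' \<union> M') \<inter> L"
      using h assms(3) by auto
    then show "A = A' \<and> M = M'" using h(5) by metis
  qed
  have "sum f (Pow (X \<union> L)) = (\<Sum>(A,M)\<in>Pow X \<times> Pow L. f (A \<union> M))"
    unfolding img by (subst sum.reindex[OF inj]) (simp add: case_prod_unfold comp_def)
  also have "\<dots> = (\<Sum>A\<in>Pow X. \<Sum>M\<in>Pow L. f (A \<union> M))"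
    by (rule sum.cartesian_product[symmetric])
  finally show ?thesis .
qed


lemma finite_leaves: "finite W \<Longrightarrow> finite (leaves W k)"
  unfolding leaves_def by simp

lemma card_leaves1: "card (leaves {w} k) = k"
  unfolding leaves_def by (simp add: card_image card_cartesian_product)

lemma main_ind:
  fixes V :: "'a set" and E :: "'a set set" and k :: nat and u x :: real
  assumes finV: "finite V" and fW: "finite W"
  shows "W \<subseteq> V' \<Longrightarrow> V' \<subseteq> V \<Longrightarrow>
    (\<Sum>Y\<in>Pow (Inl ` V' \<union> leaves W k). x ^ card Y * u ^ rk_induced (comb_all_E V E k) Y)
    = (\<Sum>B\<in>Pow V'. x ^ card B * u ^ rk_induced E B * comb_p k u x ^ card (W - B))"
  using fW
proof (induction W arbitrary: V' rule: finite_induct)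
  case empty
  have P: "Pow (Inl ` V') = (image Inl) ` Pow V'"
    by (auto simp: subset_image_iff)
  have inj: "inj_on (image Inl) (Pow V')"
    by (intro inj_onI) (simp add: inj_image_eq_iff)
  have "(\<Sum>Y\<in>Pow (Inl ` V'). x ^ card Y * u ^ rk_induced (comb_all_E V E k) Y)
      = (\<Sum>B\<in>Pow V'. x ^ card (Inl ` B :: ('a + 'a \<times> nat) set) * u ^ rk_induced (comb_all_E V E k) (Inl ` B))"
    unfolding P by (subst sum.reindex[OF inj]) (simp add: comp_def)
  also have "\<dots> = (\<Sum>B\<in>Pow V'. x ^ card B * u ^ rk_induced E B)"
    by (simp add: card_image rk_inl)
  finally show ?case by (simp add: leaves_def)
next
  case (insert w W)
  define Ek where "Ek = comb_all_E V E k"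
  define p where "p = comb_p k u x"
  define f where "f = (\<lambda>Y. x ^ card Y * u ^ rk_induced Ek Y)"
  define V0 where "V0 = V' - {w}"
  define X0 where "X0 = Inl ` V0 \<union> leaves W k"
  define X where "X = Inl ` V' \<union> leaves W k"
  define Lw where "Lw = leaves {w} k"
  define g where "g = (\<lambda>A. if Inl w \<in> A then Suc (Suc (rk_induced Ek (A - {Inl w}))) else rk_induced Ek A)"
  have wV': "w \<in> V'" and wV: "w \<in> V" using insert.prems by auto
  have finV': "finite V'" using insert.prems(2) finV finite_subset by blast
  have finV0: "finite V0" using finV' unfolding V0_def by simp
  have finX0: "finite X0" unfolding X0_def using finV0 finite_leaves[OF insert.hyps(1)] by simp
  have finX: "finite X" unfolding X_def using finV' finite_leaves[OF insert.hyps(1)] by simp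
  have finLw: "finite Lw" unfolding Lw_def using finite_leaves[of "{w}"] by simp
  have XX0: "X = insert (Inl w) X0" "Inl w \<notin> X0"
    unfolding X_def X0_def V0_def leaves_def using wV' by auto
  have disj: "X \<inter> Lw = {}" unfolding X_def Lw_def leaves_def using insert.hyps(2) by auto
  have seteq: "Inl ` V' \<union> leaves (insert w W) k = X \<union> Lw"
    unfolding X_def Lw_def leaves_def by auto
  have cardLw: "card Lw = k" unfolding Lw_def by (rule card_leaves1)
  have LwInl: "Inl w \<notin> Lw" unfolding Lw_def leaves_def by auto
  have adj: "\<And>m y. m \<in> Lw \<Longrightarrow> ({m,y} \<in> Ek) = (y = Inl w)"
    unfolding Ek_def Lw_def by (rule leaf_adj[OF wV])
  have rkAM: "rk_induced Ek (A \<union> M) = g A" if A: "A \<subseteq> X" and M: "M \<subseteq> Lw" "M \<noteq> {}" for A M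
  proof -
    have finA: "finite A" using A finX finite_subset by blast
    have finM: "finite M" using M finLw finite_subset by blast
    have MA: "M \<inter> A = {}" using A M disj by blast
    have adjM: "({m,y} \<in> Ek) = (y = Inl w)" if "m \<in> M" for m y
    proof -
      have "m \<in> Lw" using M(1) that by blast
      then show ?thesis by (rule adj)
    qed
    show ?thesis
    proof (cases "Inl w \<in> A")
      case True
      have "rk_induced Ek (A \<union> M) = Suc (Suc (rk_induced Ek (A - {Inl w})))"
        by (rule rk_pendant[OF finA finM M(2) True MA adjM])
      then show ?thesis using True unfolding g_def by simp
    next
      case False
      have "\<forall>m\<in>M. \<forall>y\<in>A \<union> M. {m,y} \<notin> Ek"
      proof (intro ballI)
        fix m y assume m: "m \<in> M" and y: "y \<in> A \<union> M"
        have "y \<noteq> Inl w" using y False LwInl M(1) by blast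
        then show "{m,y} \<notin> Ek" using adjM[OF m, of y] by simp
      qed
      then have "rk_induced Ek (A \<union> M) = rk_induced Ek A" by (rule rk_isolated[OF finA finM])
      then show ?thesis using False unfolding g_def by simp
    qed
  qed
  have binom: "(\<Sum>M\<in>Pow Lw - {{}}. x ^ card M) = (1 + x) ^ k - 1"
    using sum.remove[of "Pow Lw" "{}" "\<lambda>M. x ^ card M"] pow_binom[OF finLw, of x] finLw cardLw
    by simp
  have inner: "(\<Sum>M\<in>Pow Lw. f (A \<union> M)) = f A + ((1 + x) ^ k - 1) * (x ^ card A * u ^ g A)"
    if A: "A \<in> Pow X" for A
  proof -
    have "(\<Sum>M\<in>Pow Lw. f (A \<union> M)) = f A + (\<Sum>M\<in>Pow Lw - {{}}. f (A \<union> M))"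
      using sum.remove[of "Pow Lw" "{}" "\<lambda>M. f (A \<union> M)"] finLw by simp
    also have "(\<Sum>M\<in>Pow Lw - {{}}. f (A \<union> M)) = (\<Sum>M\<in>Pow Lw - {{}}. x ^ card M * (x ^ card A * u ^ g A))"
    proof (rule sum.cong)
      fix M assume M: "M \<in> Pow Lw - {{}}"
      have finA: "finite A" using A finX finite_subset by blast
      have finM: "finite M" using M finLw finite_subset by blast
      have "card (A \<union> M) = card A + card M" using A M disj finA finM by (intro card_Un_disjoint) auto
      moreover have "rk_induced Ek (A \<union> M) = g A" using rkAM A M by blast
      ultimately show "f (A \<union> M) = x ^ card M * (x ^ card A * u ^ g A)"
        unfolding f_def by (simp add: power_add)
    qed simp
    also have "\<dots> = ((1 + x) ^ k - 1) * (x ^ card A * u ^ g A)"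
      using binom by (simp add: sum_distrib_right[symmetric])
    finally show ?thesis .
  qed
  have outer: "(\<Sum>A\<in>Pow X. x ^ card A * u ^ g A) = (1 + x * u ^ 2) * sum f (Pow X0)"
  proof -
    have "(\<Sum>A\<in>Pow X. x ^ card A * u ^ g A) = (\<Sum>A\<in>Pow X0. x ^ card A * u ^ g A)
         + (\<Sum>A\<in>Pow X0. x ^ card (insert (Inl w) A) * u ^ g (insert (Inl w) A))"
      unfolding XX0(1) by (rule pow_insert_sum[OF XX0(2) finX0])
    also have "(\<Sum>A\<in>Pow X0. x ^ card A * u ^ g A) = sum f (Pow X0)"
      using XX0(2) unfolding f_def g_def by (intro sum.cong) auto
    also have "(\<Sum>A\<in>Pow X0. x ^ card (insert (Inl w) A) * u ^ g (insert (Inl w) A)) = (\<Sum>A\<in>Pow X0. (x * u ^ 2) * f A)"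
    proof (rule sum.cong)
      fix A assume A: "A \<in> Pow X0"
      then have finA: "finite A" "Inl w \<notin> A" using finX0 finite_subset XX0(2) by auto
      then have "insert (Inl w) A - {Inl w} = A" by auto
      then show "x ^ card (insert (Inl w) A) * u ^ g (insert (Inl w) A) = (x * u ^ 2) * f A"
        using finA unfolding g_def f_def by (simp add: power2_eq_square)
    qed simp
    also have "(\<Sum>A\<in>Pow X0. (x * u ^ 2) * f A) = (x * u ^ 2) * sum f (Pow X0)"
      by (rule sum_distrib_left[symmetric])
    finally show ?thesis by (simp add: algebra_simps)
  qed
  have IH1: "sum f (Pow X) = (\<Sum>B\<in>Pow V'. x ^ card B * u ^ rk_induced E B * p ^ card (W - B))"
    using insert.IH[of V'] insert.prems unfolding f_def X_def Ek_def p_def by blast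
  have WV0: "W \<subseteq> V0" using insert.prems insert.hyps(2) unfolding V0_def by blast
  have IH2: "sum f (Pow X0) = (\<Sum>B\<in>Pow V0. x ^ card B * u ^ rk_induced E B * p ^ card (W - B))"
    using insert.IH[OF WV0] insert.prems(2) unfolding f_def X0_def Ek_def p_def V0_def by blast
  have V'eq: "V' = insert w V0" "w \<notin> V0" using wV' unfolding V0_def by auto
  define S1 where "S1 = (\<Sum>B\<in>Pow V0. x ^ card B * u ^ rk_induced E B * p ^ card (W - B))"
  define S2 where "S2 = (\<Sum>B\<in>Pow V0. x ^ card (insert w B) * u ^ rk_induced E (insert w B) * p ^ card (W - insert w B))"
  have split1: "(\<Sum>B\<in>Pow V'. x ^ card B * u ^ rk_induced E B * p ^ card (W - B)) = S1 + S2"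
    unfolding S1_def S2_def by (subst V'eq(1), rule pow_insert_sum[OF V'eq(2) finV0])
  have split2: "(\<Sum>B\<in>Pow V'. x ^ card B * u ^ rk_induced E B * p ^ card (insert w W - B)) = p * S1 + S2"
  proof -
    have "(\<Sum>B\<in>Pow V'. x ^ card B * u ^ rk_induced E B * p ^ card (insert w W - B))
      = (\<Sum>B\<in>Pow V0. x ^ card B * u ^ rk_induced E B * p ^ card (insert w W - B))
      + (\<Sum>B\<in>Pow V0. x ^ card (insert w B) * u ^ rk_induced E (insert w B) * p ^ card (insert w W - insert w B))"
      by (subst V'eq(1), rule pow_insert_sum[OF V'eq(2) finV0])
    also have "(\<Sum>B\<in>Pow V0. x ^ card B * u ^ rk_induced E B * p ^ card (insert w W - B)) = p * S1"
      unfolding S1_def sum_distrib_left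
    proof (rule sum.cong)
      fix B assume "B \<in> Pow V0"
      then have "w \<notin> B" using V'eq(2) by blast
      then have "insert w W - B = insert w (W - B)" by blast
      moreover have "w \<notin> W - B" using insert.hyps(2) by blast
      ultimately have "card (insert w W - B) = Suc (card (W - B))" using insert.hyps(1) by simp
      then show "x ^ card B * u ^ rk_induced E B * p ^ card (insert w W - B) = p * (x ^ card B * u ^ rk_induced E B * p ^ card (W - B))"
        by simp
    qed simp
    also have "(\<Sum>B\<in>Pow V0. x ^ card (insert w B) * u ^ rk_induced E (insert w B) * p ^ card (insert w W - insert w B)) = S2"
      unfolding S2_def by (rule sum.cong) (auto simp: insert.hyps(2) Diff_insert2[symmetric])
    finally show ?thesis .
  qed
  have "(\<Sum>Y\<in>Pow (Inl ` V' \<union> leaves (insert w W) k). f Y) = (\<Sum>A\<in>Pow X. \<Sum>M\<in>Pow Lw. f (A \<union> M))"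
    unfolding seteq by (rule pow_un_sum[OF finX finLw disj])
  also have "\<dots> = (\<Sum>A\<in>Pow X. f A + ((1 + x) ^ k - 1) * (x ^ card A * u ^ g A))"
    using inner by (rule sum.cong[OF refl])
  also have "\<dots> = sum f (Pow X) + ((1 + x) ^ k - 1) * (1 + x * u ^ 2) * sum f (Pow X0)"
    by (simp add: sum.distrib sum_distrib_left[symmetric] outer)
  also have "\<dots> = S1 + S2 + ((1 + x) ^ k - 1) * (1 + x * u ^ 2) * S1"
    using IH1 IH2 split1 unfolding S1_def by simp
  also have "\<dots> = p * S1 + S2"
    unfolding p_def comb_p_def by (simp add: algebra_simps)
  finally show ?case using split2 unfolding f_def Ek_def p_def by simp
qed



theorem mainTheorem6:
  fixes V :: "'a set" and E :: "'a set set" and k :: nat and u x :: real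
  assumes "is_graph V E" and "k \<ge> 1" and "comb_p k u x \<noteq> 0"
  shows "interlace_poly (comb_all_V V k) (comb_all_E V E k) u x
         = comb_p k u x ^ card V * interlace_poly V E u (x / comb_p k u x)"
proof -
  define p where "p = comb_p k u x"
  have p0: "p \<noteq> 0" using assms(3) unfolding p_def .
  have finV: "finite V" using assms(1) unfolding is_graph_def by blast
  have "interlace_poly (comb_all_V V k) (comb_all_E V E k) u x
      = (\<Sum>Y\<in>Pow (Inl ` V \<union> leaves V k). x ^ card Y * u ^ rk_induced (comb_all_E V E k) Y)"
    unfolding interlace_poly_def comb_V_eq ..
  also have "\<dots> = (\<Sum>B\<in>Pow V. x ^ card B * u ^ rk_induced E B * p ^ card (V - B))"
    unfolding p_def by (rule main_ind[OF finV finV]) auto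
  also have "\<dots> = (\<Sum>B\<in>Pow V. p ^ card V * ((x / p) ^ card B * u ^ rk_induced E B))"
  proof (rule sum.cong)
    fix B assume B: "B \<in> Pow V"
    then have "card V = card (V - B) + card B"
      using finV by (simp add: card_Diff_subset card_mono finite_subset)
    then have "p ^ card V * (x / p) ^ card B = p ^ card (V - B) * (p ^ card B * (x / p) ^ card B)"
      by (simp only: power_add mult.assoc)
    also have "p ^ card B * (x / p) ^ card B = (p * (x / p)) ^ card B"
      by (rule power_mult_distrib[symmetric])
    also have "p * (x / p) = x" using p0 by simp
    finally show "x ^ card B * u ^ rk_induced E B * p ^ card (V - B) = p ^ card V * ((x / p) ^ card B * u ^ rk_induced E B)"
      by (simp add: algebra_simps)
  qed simp
  also have "\<dots> = p ^ card V * interlace_poly V E u (x / p)"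
    unfolding interlace_poly_def by (simp add: sum_distrib_left)
  finally show ?thesis unfolding p_def .
qed

end
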